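(* Let $X$ be an orthomodular lattice. The set $\mathrm{End}(X)=\mathbf{OMLatGal}(X,X)$, with composition in $\mathbf{OMLatGal}$ as multiplication, the identity as unit, the dagger $(s_*,s^* )^\dagger=(s^*,s_* )$ as involution, and $[s]=\ker(s)\circ\ker(s)^\dagger$, is a Foulis semigroup. Explicitly, for $s\in\mathrm{End}(X)$ and $x\in X$, $[s]_*(x)=[s]^*(x)=s^*(1)^\perp\vee(s^*(1)\wedge x^\perp)$, i.e. $[s]_*(x)=s^*(1)\supset x^\perp=(x\,\&\,s^*(1))^\perp$, where $a\supset b=a^\perp\vee(a\wedge b)$ and $a\,\&\,b=b\wedge(b^\perp\vee a)$.
   Context: An orthomodular lattice is a bounded lattice with an order-reversing involution $x\mapsto x^\perp$ such that $x\wedge x^\perp=0$, $x\vee x^\perp=1$, and $x\le y$ implies $y=x\vee(x^\perp\wedge y)$. $\mathbf{OMLatGal}$: objects orthomodular lattices; morphisms $f:X\to Y$ are pairs $(f_*,f^* )$ of order-reversing maps $f_*:X\to Y$, $f^*:Y\to X$ with $y\le f_*(x)\iff x\le f^*(y)$; identity has both components $x\mapsto x^\perp$; $(g\circ f)_*=g_*\circ\perp\circ f_*$, $(g\circ f)^*=f^*\circ\perp\circ g^*$; dagger $(f_*,f^* )^\dagger=(f^*,f_* )$. It is a dagger kernel category whose kernel of $f$ is the morphism $k:\downarrow k\to X$ with $k=f^*(1)$, where $\downarrow a=\{u\le a\}$ with complement $a\wedge u^\perp$ and $a_*(u)=u^\perp$, $a^*(x)=a\wedge x^\perp$. A Foulis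 semigroup is a monoid $(S,\cdot,1)$ with maps $(-)^\dagger:S\to S$ and $[-]:S\to S$ such that: (1) $1^\dagger=1$, $(s\cdot t)^\dagger=t^\dagger\cdot s^\dagger$, $s^{\dagger\dagger}=s$; (2) $[s]\cdot[s]=[s]=[s]^\dagger$; (3) $0:=[1]$ satisfies $0\cdot s=0=s\cdot 0$ for all $s$; (4) for all $s,x$: $s\cdot x=0$ iff $x=[s]\cdot y$ for some $y\in S$. *)

theory Defs
  imports Main
begin

unbundle lattice_syntax

definition orthomodular :: "('a::bounded_lattice \<Rightarrow> 'a) \<Rightarrow> bool" where
  "orthomodular perp \<longleftrightarrow>
     (\<forall>x y. x \<le> y \<longrightarrow> perp y \<le> perp x) \<and>
     (\<forall>x. perp (perp x) = x) \<and>
     (\<forall>x. x \<sqinter> perp x = bot) \<and>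
     (\<forall>x. x \<squnion> perp x = top) \<and>
     (\<forall>x y. x \<le> y \<longrightarrow> y = x \<squnion> (perp x \<sqinter> y))"

text \<open>Morphisms of OMLatGal between lattices on types 'a and 'b: pairs (f_*, f^*).\<close>
definition omgal_hom :: "(('a::order \<Rightarrow> 'b::order) \<times> ('b \<Rightarrow> 'a)) set" where
  "omgal_hom = {(fl, fu). antimono fl \<and> antimono fu \<and>
                  (\<forall>x y. y \<le> fl x \<longleftrightarrow> x \<le> fu y)}"

abbreviation omgal_End :: "(('a::order \<Rightarrow> 'a) \<times> ('a \<Rightarrow> 'a)) set" where
  "omgal_End \<equiv> omgal_hom"

text \<open>Composition g \<circ> f in OMLatGal, where c is the orthocomplement of the middle object:
  (g\<circ>f)_* = g_* \<circ> c \<circ> f_*,  (g\<circ>f)^* = f^* \<circ> c \<circ> g^*.\<close>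
definition omgal_comp ::
  "('b \<Rightarrow> 'b) \<Rightarrow> ('b \<Rightarrow> 'c) \<times> ('c \<Rightarrow> 'b) \<Rightarrow> ('a \<Rightarrow> 'b) \<times> ('b \<Rightarrow> 'a)
     \<Rightarrow> ('a \<Rightarrow> 'c) \<times> ('c \<Rightarrow> 'a)" where
  "omgal_comp c g f = (fst g \<circ> c \<circ> fst f, snd f \<circ> c \<circ> snd g)"

definition omgal_id :: "('a \<Rightarrow> 'a) \<Rightarrow> ('a \<Rightarrow> 'a) \<times> ('a \<Rightarrow> 'a)" where
  "omgal_id perp = (perp, perp)"

definition omgal_dagger :: "('a \<Rightarrow> 'b) \<times> ('b \<Rightarrow> 'a) \<Rightarrow> ('b \<Rightarrow> 'a) \<times> ('a \<Rightarrow> 'b)" where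
  "omgal_dagger f = (snd f, fst f)"

text \<open>The kernel of f : X \<rightarrow> Y is k : \<down>k \<rightarrow> X with k = f^*(1), k_*(u) = u^\<perp>,
  k^*(x) = k \<sqinter> x^\<perp>. The object \<down>k is represented by the elements of 'a below k,
  with orthocomplement u \<mapsto> k \<sqinter> u^\<perp>.\<close>
definition omgal_ker_elem :: "('a::bounded_lattice \<Rightarrow> 'b) \<times> ('b::bounded_lattice \<Rightarrow> 'a) \<Rightarrow> 'a" where
  "omgal_ker_elem f = snd f top"

definition downset_perp :: "('a::lattice \<Rightarrow> 'a) \<Rightarrow> 'a \<Rightarrow> 'a \<Rightarrow> 'a" where
  "downset_perp perp k u = k \<sqinter> perp u"

definition omgal_ker ::
  "('a::bounded_lattice \<Rightarrow> 'a) \<Rightarrow> ('a \<Rightarrow> 'b) \<times> ('b::bounded_lattice \<Rightarrow> 'a)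
     \<Rightarrow> ('a \<Rightarrow> 'a) \<times> ('a \<Rightarrow> 'a)" where
  "omgal_ker perp f = (perp, \<lambda>x. omgal_ker_elem f \<sqinter> perp x)"

text \<open>[s] = ker(s) \<circ> ker(s)^\<dagger>, composed through the object \<down>k.\<close>
definition foulis_bracket ::
  "('a::bounded_lattice \<Rightarrow> 'a) \<Rightarrow> ('a \<Rightarrow> 'a) \<times> ('a \<Rightarrow> 'a) \<Rightarrow> ('a \<Rightarrow> 'a) \<times> ('a \<Rightarrow> 'a)" where
  "foulis_bracket perp s =
     omgal_comp (downset_perp perp (omgal_ker_elem s)) (omgal_ker perp s)
       (omgal_dagger (omgal_ker perp s))"

definition foulis_semigroup ::
  "'s set \<Rightarrow> ('s \<Rightarrow> 's \<Rightarrow> 's) \<Rightarrow> 's \<Rightarrow> ('s \<Rightarrow> 's) \<Rightarrow> ('s \<Rightarrow> 's) \<Rightarrow> bool" where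
  "foulis_semigroup S mult one dag br \<longleftrightarrow>
     \<comment> \<open>monoid\<close>
     one \<in> S \<and>
     (\<forall>s\<in>S. \<forall>t\<in>S. mult s t \<in> S) \<and>
     (\<forall>s\<in>S. \<forall>t\<in>S. \<forall>u\<in>S. mult (mult s t) u = mult s (mult t u)) \<and>
     (\<forall>s\<in>S. mult one s = s \<and> mult s one = s) \<and>
     (\<forall>s\<in>S. dag s \<in> S \<and> br s \<in> S) \<and>
     \<comment> \<open>(1) involution\<close>
     dag one = one \<and>
     (\<forall>s\<in>S. \<forall>t\<in>S. dag (mult s t) = mult (dag t) (dag s)) \<and>
     (\<forall>s\<in>S. dag (dag s) = s) \<and>
     \<comment> \<open>(2) projections\<close>
     (\<forall>s\<in>S. mult (br s) (br s) = br s \<and> br s = dag (br s)) \<and>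
     \<comment> \<open>(3) zero\<close>
     (\<forall>s\<in>S. mult (br one) s = br one \<and> mult s (br one) = br one) \<and>
     \<comment> \<open>(4)\<close>
     (\<forall>s\<in>S. \<forall>x\<in>S. mult s x = br one \<longleftrightarrow> (\<exists>y\<in>S. x = mult (br s) y))"

definition sasaki_imp :: "('a::lattice \<Rightarrow> 'a) \<Rightarrow> 'a \<Rightarrow> 'a \<Rightarrow> 'a" where
  "sasaki_imp perp a b = perp a \<squnion> (a \<sqinter> b)"

definition and_then :: "('a::lattice \<Rightarrow> 'a) \<Rightarrow> 'a \<Rightarrow> 'a \<Rightarrow> 'a" where
  "and_then perp a b = b \<sqinter> (perp b \<squnion> a)"

end

theory Submission
  imports Defs
begin

lemma hom_iff:
  "f \<in> omgal_hom \<longleftrightarrow> (\<forall>x y. y \<le> fst f x \<longleftrightarrow> x \<le> snd f y)"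
proof
  assume "f \<in> omgal_hom" thus "\<forall>x y. y \<le> fst f x \<longleftrightarrow> x \<le> snd f y"
    by (cases f) (auto simp: omgal_hom_def)
next
  assume G: "\<forall>x y. y \<le> fst f x \<longleftrightarrow> x \<le> snd f y"
  have a1: "antimono (fst f)"
  proof (rule antimonoI)
    fix x x' :: 'a assume "x \<le> x'"
    moreover have "x' \<le> snd f (fst f x')" using G by blast
    ultimately show "fst f x' \<le> fst f x" using G order_trans by blast
  qed
  have a2: "antimono (snd f)"
  proof (rule antimonoI)
    fix x x' :: 'b assume "x \<le> x'"
    moreover have "x' \<le> fst f (snd f x')" using G by blast
    ultimately show "snd f x' \<le> snd f x" using G order_trans by blast
  qed
  show "f \<in> omgal_hom" using G a1 a2 by (cases f) (auto simp: omgal_hom_def)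
qed

definition pp :: "('a::bounded_lattice \<Rightarrow> 'a) \<Rightarrow> 'a \<Rightarrow> 'a \<Rightarrow> 'a" where
  "pp perp k x = perp k \<squnion> (k \<sqinter> perp x)"

context
  fixes perp :: "'a::bounded_lattice \<Rightarrow> 'a"
  assumes OM: "orthomodular perp"
begin

lemma anti: "x \<le> y \<Longrightarrow> perp y \<le> perp x"
  using OM by (auto simp: orthomodular_def)

lemma inv[simp]: "perp (perp x) = x"
  using OM by (auto simp: orthomodular_def)

lemma omlaw: "x \<le> y \<Longrightarrow> y = x \<squnion> (perp x \<sqinter> y)"
  using OM by (auto simp: orthomodular_def)

lemma perp_le_iff: "perp x \<le> perp y \<longleftrightarrow> y \<le> x"
  by (metis anti inv)

lemma le_perp: "x \<le> perp y \<longleftrightarrow> y \<le> perp x"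
  by (metis perp_le_iff inv)

lemma dm_inf: "perp (x \<sqinter> y) = perp x \<squnion> perp y"
proof (rule antisym)
  have "perp (perp x \<squnion> perp y) \<le> x \<sqinter> y"
    by (metis anti inf.boundedI inv sup.cobounded1 sup.cobounded2)
  thus "perp (x \<sqinter> y) \<le> perp x \<squnion> perp y" by (metis anti inv)
  show "perp x \<squnion> perp y \<le> perp (x \<sqinter> y)"
    by (simp add: anti)
qed

lemma dm_sup: "perp (x \<squnion> y) = perp x \<sqinter> perp y"
  by (metis dm_inf inv)

lemma perp_top[simp]: "perp top = bot"
  by (metis bot.extremum inv perp_le_iff top.extremum_unique)

lemma perp_bot[simp]: "perp bot = top"
  by (metis inv perp_top)

lemma omdual: "y \<le> k \<Longrightarrow> y = k \<sqinter> (perp k \<squnion> y)"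
proof -
  assume "y \<le> k"
  hence "perp k \<le> perp y" by (rule anti)
  hence "perp y = perp k \<squnion> (k \<sqinter> perp y)" using omlaw by fastforce
  hence "perp (perp y) = perp (perp k \<squnion> (k \<sqinter> perp y))" by simp
  thus ?thesis by (simp add: dm_sup dm_inf)
qed

lemma perp_pp: "perp (pp perp k z) = k \<sqinter> (perp k \<squnion> z)"
  by (simp add: pp_def dm_sup dm_inf)

lemma sasaki_adj: "k \<sqinter> (perp k \<squnion> x) \<le> b \<longleftrightarrow> x \<le> perp k \<squnion> (k \<sqinter> b)"
proof
  assume h: "k \<sqinter> (perp k \<squnion> x) \<le> b"
  hence h2: "k \<sqinter> (perp k \<squnion> x) \<le> k \<sqinter> b" by simp
  have "perp k \<squnion> x = perp k \<squnion> (k \<sqinter> (perp k \<squnion> x))"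
    using omlaw[of "perp k" "perp k \<squnion> x"] by simp
  hence "x \<le> perp k \<squnion> (k \<sqinter> (perp k \<squnion> x))" by (metis sup.cobounded2)
  also have "\<dots> \<le> perp k \<squnion> (k \<sqinter> b)" using h2 sup.mono by blast
  finally show "x \<le> perp k \<squnion> (k \<sqinter> b)" .
next
  assume h: "x \<le> perp k \<squnion> (k \<sqinter> b)"
  have "k \<sqinter> (perp k \<squnion> x) \<le> k \<sqinter> (perp k \<squnion> (k \<sqinter> b))"
  proof -
    have "perp k \<squnion> x \<le> perp k \<squnion> (k \<sqinter> b)" by (rule sup_least[OF sup_ge1 h])
    thus ?thesis by (rule inf_mono[OF order_refl])
  qed
  also have "\<dots> = k \<sqinter> b" using omdual[of "k \<sqinter> b" k] by simp
  finally show "k \<sqinter> (perp k \<squnion> x) \<le> b" by simp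
qed

lemma pp_galois: "y \<le> pp perp k x \<longleftrightarrow> x \<le> pp perp k y"
proof -
  have "y \<le> pp perp k x \<longleftrightarrow> perp (pp perp k x) \<le> perp y"
    by (simp add: perp_le_iff)
  also have "\<dots> \<longleftrightarrow> x \<le> perp k \<squnion> (k \<sqinter> perp y)"
    by (simp add: perp_pp sasaki_adj)
  finally show ?thesis by (simp add: pp_def)
qed

lemma pp_idem: "pp perp k (perp (pp perp k x)) = pp perp k x"
proof -
  have "k \<sqinter> (perp k \<squnion> (k \<sqinter> perp x)) = k \<sqinter> perp x"
    using omdual[of "k \<sqinter> perp x" k] by simp
  thus ?thesis by (simp add: pp_def perp_pp dm_inf dm_sup)
qed

lemma bracket_eq: "foulis_bracket perp s = (pp perp (snd s top), pp perp (snd s top))"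
  by (simp add: foulis_bracket_def omgal_comp_def omgal_ker_def omgal_dagger_def
      downset_perp_def omgal_ker_elem_def pp_def dm_inf dm_sup fun_eq_iff)

lemma pp_bot: "pp perp bot = (\<lambda>_. top)"
  by (auto simp: pp_def)

lemma zero_eq: "foulis_bracket perp (omgal_id perp) = (\<lambda>_. top, \<lambda>_. top)"
  by (simp add: bracket_eq omgal_id_def pp_bot)

lemma comp_hom: "f \<in> omgal_hom \<Longrightarrow> g \<in> omgal_hom \<Longrightarrow> omgal_comp perp g f \<in> omgal_hom"
  unfolding hom_iff omgal_comp_def
proof (simp, intro allI)
  fix x y
  assume A: "\<forall>x y. (y \<le> fst f x) = (x \<le> snd f y)" and B: "\<forall>x y. (y \<le> fst g x) = (x \<le> snd g y)"
  have "perp (fst f x) \<le> snd g y \<longleftrightarrow> perp (snd g y) \<le> fst f x"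
    by (metis le_perp inv)
  also have "\<dots> \<longleftrightarrow> x \<le> snd f (perp (snd g y))" using A by blast
  finally show "(perp (fst f x) \<le> snd g y) = (x \<le> snd f (perp (snd g y)))" .
qed

lemma kill_lemma:
  fixes s x :: "('a \<Rightarrow> 'a) \<times> ('a \<Rightarrow> 'a)"
  assumes s: "s \<in> omgal_hom" and x: "x \<in> omgal_hom" and h: "perp (snd s top) \<le> fst x top"
  shows "omgal_comp perp s x = (\<lambda>_. top, \<lambda>_. top)"
proof -
  have Gs: "\<And>a b. b \<le> fst s a \<longleftrightarrow> a \<le> snd s b" using s by (simp add: hom_iff)
  have Gx: "\<And>a b. b \<le> fst x a \<longleftrightarrow> a \<le> snd x b" using x by (simp add: hom_iff)
  have ams: "antimono (snd s)" using s by (cases s) (auto simp: omgal_hom_def)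
  have amx: "antimono (fst x)" using x by (cases x) (auto simp: omgal_hom_def)
  have 1: "fst s (perp (fst x z)) = top" for z
  proof -
    have "fst x top \<le> fst x z" by (rule antimonoD[OF amx]) simp
    hence "perp (snd s top) \<le> fst x z" using h by (rule order_trans[rotated])
    hence "perp (fst x z) \<le> perp (perp (snd s top))" by (rule anti)
    hence "perp (fst x z) \<le> snd s top" by simp
    hence "top \<le> fst s (perp (fst x z))" using Gs by blast
    thus ?thesis by (simp add: top_unique)
  qed
  have 2: "snd x (perp (snd s z)) = top" for z
  proof -
    have "snd s top \<le> snd s z" by (rule antimonoD[OF ams]) simp
    hence "perp (snd s z) \<le> perp (snd s top)" by (rule anti)
    hence "perp (snd s z) \<le> fst x top" using h by (rule order_trans)
    hence "top \<le> snd x (perp (snd s z))" using Gx by blast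
    thus ?thesis by (simp add: top_unique)
  qed
  show ?thesis using 1 2 by (auto simp: omgal_comp_def)
qed

end

theorem mainTheorem15:
  fixes perp :: "'a::bounded_lattice \<Rightarrow> 'a"
  assumes "orthomodular perp"
  shows "foulis_semigroup (omgal_End :: (('a \<Rightarrow> 'a) \<times> ('a \<Rightarrow> 'a)) set)
           (omgal_comp perp) (omgal_id perp) omgal_dagger (foulis_bracket perp)
       \<and> (\<forall>s \<in> (omgal_End :: (('a \<Rightarrow> 'a) \<times> ('a \<Rightarrow> 'a)) set). \<forall>x.
            fst (foulis_bracket perp s) x = perp (snd s top) \<squnion> (snd s top \<sqinter> perp x)
          \<and> snd (foulis_bracket perp s) x = perp (snd s top) \<squnion> (snd s top \<sqinter> perp x)
          \<and> fst (foulis_bracket perp s) x = sasaki_imp perp (snd s top) (perp x)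
          \<and> fst (foulis_bracket perp s) x = perp (and_then perp x (snd s top)))"
proof -
  note OM = assms
  have homI: "\<And>f. (\<forall>x y. y \<le> fst f x \<longleftrightarrow> x \<le> snd f y) \<Longrightarrow> f \<in> omgal_hom"
    by (simp add: hom_iff)
  have G: "\<And>f x y. f \<in> omgal_hom \<Longrightarrow> y \<le> fst f x \<longleftrightarrow> x \<le> snd f y"
    by (simp add: hom_iff)
  have one: "omgal_id perp \<in> omgal_hom"
    by (rule homI) (simp add: omgal_id_def le_perp[OF OM])
  have clos: "\<forall>s\<in>omgal_hom. \<forall>t\<in>omgal_hom. omgal_comp perp s t \<in> omgal_hom"
    using comp_hom[OF OM] by blast
  have assoc: "\<And>s t u. omgal_comp perp (omgal_comp perp s t) u = omgal_comp perp s (omgal_comp perp t u)"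
    by (simp add: omgal_comp_def o_assoc)
  have unit: "\<And>s. omgal_comp perp (omgal_id perp) s = s \<and> omgal_comp perp s (omgal_id perp) = s"
    by (auto simp: omgal_comp_def omgal_id_def comp_def inv[OF OM])
  have dagm: "\<And>s. s \<in> omgal_hom \<Longrightarrow> omgal_dagger s \<in> omgal_hom"
    by (rule homI) (auto simp: omgal_dagger_def G)
  have brm: "\<And>s. foulis_bracket perp s \<in> omgal_hom"
    by (rule homI) (simp add: bracket_eq[OF OM] pp_galois[OF OM])
  have dag1: "omgal_dagger (omgal_id perp) = omgal_id perp"
    by (simp add: omgal_dagger_def omgal_id_def)
  have dagc: "\<And>s t. omgal_dagger (omgal_comp perp s t) = omgal_comp perp (omgal_dagger t) (omgal_dagger s)"
    by (simp add: omgal_dagger_def omgal_comp_def)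
  have dagdag: "\<And>s. omgal_dagger (omgal_dagger s) = s"
    by (simp add: omgal_dagger_def)
  have bridem: "\<And>s. omgal_comp perp (foulis_bracket perp s) (foulis_bracket perp s) = foulis_bracket perp s
      \<and> foulis_bracket perp s = omgal_dagger (foulis_bracket perp s)"
    by (simp add: bracket_eq[OF OM] omgal_comp_def omgal_dagger_def comp_def fun_eq_iff pp_idem[OF OM])
  have zero: "omgal_comp perp (foulis_bracket perp (omgal_id perp)) s = foulis_bracket perp (omgal_id perp)
      \<and> omgal_comp perp s (foulis_bracket perp (omgal_id perp)) = foulis_bracket perp (omgal_id perp)"
    if s: "s \<in> omgal_hom" for s :: "('a \<Rightarrow> 'a) \<times> ('a \<Rightarrow> 'a)"
  proof -
    have "top \<le> snd s bot" using G[OF s, of bot top, THEN iffD1] by simp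
    hence a: "snd s bot = top" by (simp add: top_unique)
    have "top \<le> fst s bot" using G[OF s, of top bot, THEN iffD2] by simp
    hence b: "fst s bot = top" by (simp add: top_unique)
    show ?thesis using a b by (simp add: zero_eq[OF OM] omgal_comp_def comp_def perp_top[OF OM])
  qed
  have four: "omgal_comp perp s x = foulis_bracket perp (omgal_id perp) \<longleftrightarrow>
     (\<exists>y\<in>omgal_hom. x = omgal_comp perp (foulis_bracket perp s) y)"
    if s: "s \<in> omgal_hom" and x: "x \<in> omgal_hom" for s x :: "('a \<Rightarrow> 'a) \<times> ('a \<Rightarrow> 'a)"
  proof -
    define k where "k = snd s top"
    show ?thesis
    proof
      assume "omgal_comp perp s x = foulis_bracket perp (omgal_id perp)"
      hence "fst s (perp (fst x top)) = top"
        by (auto simp: zero_eq[OF OM] omgal_comp_def dest: fun_cong[where x = top])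
      hence "perp (fst x top) \<le> k" using G[OF s] k_def by (metis order_refl)
      hence "perp k \<le> perp (perp (fst x top))" by (rule anti[OF OM])
      hence hk: "perp k \<le> fst x top" by (simp add: inv[OF OM])
      have amx: "antimono (fst x)" using x by (cases x) (auto simp: omgal_hom_def)
      have hz: "perp k \<le> fst x z" for z
        using hk antimonoD[OF amx top_greatest] by (rule order_trans)
      have e1: "pp perp k (perp (fst x z)) = fst x z" for z
      proof -
        have "fst x z = perp k \<squnion> (perp (perp k) \<sqinter> fst x z)" using omlaw[OF OM hz] .
        thus ?thesis by (simp add: pp_def inv[OF OM])
      qed
      have key: "perp k \<le> a \<Longrightarrow> (perp (pp perp k z) \<le> a \<longleftrightarrow> z \<le> a)" for a z
      proof -
        assume a: "perp k \<le> a"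
        have "perp (pp perp k z) \<le> a \<longleftrightarrow> z \<le> perp k \<squnion> (k \<sqinter> a)"
          by (simp add: perp_pp[OF OM] sasaki_adj[OF OM])
        also have "perp k \<squnion> (k \<sqinter> a) = a"
          using omlaw[OF OM a] by (simp add: inv[OF OM])
        finally show ?thesis .
      qed
      have e2: "snd x (perp (pp perp k z)) = snd x z" for z
      proof (rule antisym)
        have "perp (pp perp k z) \<le> fst x (snd x (perp (pp perp k z)))" using G[OF x] by blast
        hence "z \<le> fst x (snd x (perp (pp perp k z)))" using key hz by blast
        thus "snd x (perp (pp perp k z)) \<le> snd x z" using G[OF x] by blast
        have "z \<le> fst x (snd x z)" using G[OF x] by blast
        hence "perp (pp perp k z) \<le> fst x (snd x z)" using key hz by blast
        thus "snd x z \<le> snd x (perp (pp perp k z))" using G[OF x] by blast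
      qed
      have "x = omgal_comp perp (foulis_bracket perp s) x"
        using e1 e2 by (cases x) (auto simp: bracket_eq[OF OM] omgal_comp_def k_def comp_def)
      thus "\<exists>y\<in>omgal_hom. x = omgal_comp perp (foulis_bracket perp s) y" using x by blast
    next
      assume "\<exists>y\<in>omgal_hom. x = omgal_comp perp (foulis_bracket perp s) y"
      then obtain y where y: "y \<in> omgal_hom" and xe: "x = omgal_comp perp (foulis_bracket perp s) y" by blast
      have "fst x top = pp perp k (perp (fst y top))"
        by (simp add: xe bracket_eq[OF OM] omgal_comp_def k_def)
      hence "perp k \<le> fst x top" by (simp add: pp_def)
      thus "omgal_comp perp s x = foulis_bracket perp (omgal_id perp)"
        using kill_lemma[OF OM s x] k_def zero_eq[OF OM] by simp
    qed
  qed
  have FS: "foulis_semigroup (omgal_End :: (('a \<Rightarrow> 'a) \<times> ('a \<Rightarrow> 'a)) set)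
           (omgal_comp perp) (omgal_id perp) omgal_dagger (foulis_bracket perp)"
    unfolding foulis_semigroup_def
    using one clos assoc unit dagm brm dag1 dagc dagdag bridem zero four by blast
  have EQ: "\<forall>s \<in> (omgal_End :: (('a \<Rightarrow> 'a) \<times> ('a \<Rightarrow> 'a)) set). \<forall>x.
            fst (foulis_bracket perp s) x = perp (snd s top) \<squnion> (snd s top \<sqinter> perp x)
          \<and> snd (foulis_bracket perp s) x = perp (snd s top) \<squnion> (snd s top \<sqinter> perp x)
          \<and> fst (foulis_bracket perp s) x = sasaki_imp perp (snd s top) (perp x)
          \<and> fst (foulis_bracket perp s) x = perp (and_then perp x (snd s top))"
    by (simp add: bracket_eq[OF OM] pp_def sasaki_imp_def and_then_def dm_inf[OF OM] dm_sup[OF OM] inv[OF OM])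
  show ?thesis using FS EQ by blast
qed

end
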